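(* Let $p_{\mathcal{M}}$ be a probability distribution over a set $\mathcal{M}$ of Markov decision processes $m=(\mathcal{S}_m,\mathcal{A},r_m,\mathcal{P}_m,\rho_m,\gamma)$ with common action space $\mathcal{A}$ and common discount factor $\gamma\in(0,1)$, let $\mathcal{M}_{\mathrm{train}}\subset\mathcal{M}$ with $M=\int_{\mathcal{M}_{\mathrm{train}}}p_{\mathcal{M}}(m)\,\mathrm{d}m>0$ and $p_{\mathcal{M}_{\mathrm{train}}}(m)=p_{\mathcal{M}}(m)\mathbb{I}(m\in\mathcal{M}_{\mathrm{train}})/M$. Assume each state of $m$ is written $s=\phi_m(u)$ with $u$ in a set $\mathcal{U}$ independent of $m$ and $\phi_m:\mathcal{U}\to\mathcal{S}_m$. Let $\pi,\tilde\pi$ be any two policies and $A_{\max}=\max_{m,s,a}|A_m^{\pi}(s,a)|$. Then $$\eta(\tilde\pi)=\eta(\pi)+\mathbb{E}_{m\sim p_{\mathcal{M}_{\mathrm{train}}},\,s\sim\rho^m_{\tilde\pi},\,a\sim\tilde\pi(\cdot|s)}\left[A_m^\pi(s,a)\right],$$ and $$\eta(\tilde\pi)\geq L_\pi(\tilde\pi)-\frac{4\gamma A_{\max}}{(1-\gamma)^2}\,\mathbb{E}_{m\sim p_{\mathcal{M}_{\mathrm{train}}}}\left\{\max_{u\in\mathcal{U}}D_{\mathrm{TV}}\left[\pi(\cdot|\phi_m(u)),\tilde\pi(\cdot|\phi_m(u))\right]^2\right\},$$ where $L_\pi(\tilde\pi)=\eta(\pi)+\mathbb{E}_{m\sim 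p_{\mathcal{M}_{\mathrm{train}}},\,s\sim\rho^m_{\pi},\,a\sim\tilde\pi(\cdot|s)}\left[A_m^\pi(s,a)\right]$.
   Context: State and action spaces are discrete. A policy $\pi$ assigns to each state $s$ a distribution $\pi(\cdot|s)$ on $\mathcal{A}$. In MDP $m$: $Q_m^\pi(s_t,a_t)=\mathbb{E}\left[\sum_{k\ge0}\gamma^k r_m(s_{t+k},a_{t+k})\right]$ (trajectory continued under $\pi$ and $\mathcal{P}_m$), $V_m^\pi(s)=\mathbb{E}_{a\sim\pi(\cdot|s)}[Q_m^\pi(s,a)]$, $A_m^\pi=Q_m^\pi-V_m^\pi$. The training objective is $\eta(\pi)=\mathbb{E}_{m\sim p_{\mathcal{M}_{\mathrm{train}}}}\mathbb{E}_{\tau_m\sim\pi}\left[\sum_{t\ge0}\gamma^t r_m(s_t^m,a_t^m)\right]$ with $s_0^m\sim\rho_m$, $a_t^m\sim\pi(\cdot|s_t^m)$, $s_{t+1}^m\sim\mathcal{P}_m(\cdot|s_t^m,a_t^m)$. The unnormalized discounted visitation frequency is $\rho^m_\pi(s)=\sum_{t\ge0}\gamma^t\,\mathbb{P}(s_t^m=s\mid m,\pi)$, and "$s\sim\rho_\pi^m$" denotes expectation weighted by it. $D_{\mathrm{TV}}$ is total variation distance. *)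

theory Defs
  imports "HOL-Probability.Probability"
begin

definition step_sa :: "('s \<Rightarrow> 'a \<Rightarrow> 's pmf) \<Rightarrow> ('s \<Rightarrow> 'a pmf) \<Rightarrow> 's \<times> 'a \<Rightarrow> ('s \<times> 'a) pmf" where
  "step_sa P pol x = bind_pmf (P (fst x) (snd x)) (\<lambda>s'. map_pmf (\<lambda>a'. (s', a')) (pol s'))"

primrec sa_dist :: "('s \<Rightarrow> 'a \<Rightarrow> 's pmf) \<Rightarrow> ('s \<Rightarrow> 'a pmf) \<Rightarrow> 's \<Rightarrow> 'a \<Rightarrow> nat \<Rightarrow> ('s \<times> 'a) pmf" where
  "sa_dist P pol s a 0 = return_pmf (s, a)"
| "sa_dist P pol s a (Suc k) = bind_pmf (sa_dist P pol s a k) (step_sa P pol)"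

primrec state_dist :: "('s \<Rightarrow> 'a \<Rightarrow> 's pmf) \<Rightarrow> ('s \<Rightarrow> 'a pmf) \<Rightarrow> 's pmf \<Rightarrow> nat \<Rightarrow> 's pmf" where
  "state_dist P pol rho0 0 = rho0"
| "state_dist P pol rho0 (Suc t) = bind_pmf (state_dist P pol rho0 t) (\<lambda>s. bind_pmf (pol s) (\<lambda>a. P s a))"

definition Qfun :: "('s \<Rightarrow> 'a \<Rightarrow> 's pmf) \<Rightarrow> ('s \<Rightarrow> 'a \<Rightarrow> real) \<Rightarrow> real \<Rightarrow> ('s \<Rightarrow> 'a pmf) \<Rightarrow> 's \<Rightarrow> 'a \<Rightarrow> real" where
  "Qfun P r \<gamma> pol s a =
     (\<Sum>k. \<gamma> ^ k * measure_pmf.expectation (sa_dist P pol s a k) (\<lambda>x. r (fst x) (snd x)))"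

definition Vfun :: "('s \<Rightarrow> 'a \<Rightarrow> 's pmf) \<Rightarrow> ('s \<Rightarrow> 'a \<Rightarrow> real) \<Rightarrow> real \<Rightarrow> ('s \<Rightarrow> 'a pmf) \<Rightarrow> 's \<Rightarrow> real" where
  "Vfun P r \<gamma> pol s = measure_pmf.expectation (pol s) (\<lambda>a. Qfun P r \<gamma> pol s a)"

definition Adv :: "('s \<Rightarrow> 'a \<Rightarrow> 's pmf) \<Rightarrow> ('s \<Rightarrow> 'a \<Rightarrow> real) \<Rightarrow> real \<Rightarrow> ('s \<Rightarrow> 'a pmf) \<Rightarrow> 's \<Rightarrow> 'a \<Rightarrow> real" where
  "Adv P r \<gamma> pol s a = Qfun P r \<gamma> pol s a - Vfun P r \<gamma> pol s"

definition visit :: "('s \<Rightarrow> 'a \<Rightarrow> 's pmf) \<Rightarrow> ('s \<Rightarrow> 'a pmf) \<Rightarrow> 's pmf \<Rightarrow> real \<Rightarrow> 's \<Rightarrow> real" where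
  "visit P pol rho0 \<gamma> s = (\<Sum>t. \<gamma> ^ t * pmf (state_dist P pol rho0 t) s)"

definition visit_exp :: "('s \<Rightarrow> 'a \<Rightarrow> 's pmf) \<Rightarrow> ('s \<Rightarrow> 'a pmf) \<Rightarrow> 's pmf \<Rightarrow> real \<Rightarrow> ('s \<Rightarrow> real) \<Rightarrow> real" where
  "visit_exp P pol rho0 \<gamma> f = infsum (\<lambda>s. visit P pol rho0 \<gamma> s * f s) UNIV"

definition eta_mdp :: "('s \<Rightarrow> 'a \<Rightarrow> 's pmf) \<Rightarrow> ('s \<Rightarrow> 'a \<Rightarrow> real) \<Rightarrow> 's pmf \<Rightarrow> real \<Rightarrow> ('s \<Rightarrow> 'a pmf) \<Rightarrow> real" where
  "eta_mdp P r rho0 \<gamma> pol =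
     (\<Sum>t. \<gamma> ^ t * measure_pmf.expectation (state_dist P pol rho0 t)
                      (\<lambda>s. measure_pmf.expectation (pol s) (\<lambda>a. r s a)))"

definition p_train :: "'m measure \<Rightarrow> 'm set \<Rightarrow> 'm measure" where
  "p_train pM Mt = density pM (\<lambda>m. ennreal (indicator Mt m / measure pM Mt))"

definition E_train :: "'m measure \<Rightarrow> 'm set \<Rightarrow> ('m \<Rightarrow> real) \<Rightarrow> real" where
  "E_train pM Mt f = (\<integral>m. f m \<partial>(p_train pM Mt))"

definition eta :: "'m measure \<Rightarrow> 'm set \<Rightarrow> ('m \<Rightarrow> 's \<Rightarrow> 'a \<Rightarrow> 's pmf) \<Rightarrow> ('m \<Rightarrow> 's \<Rightarrow> 'a \<Rightarrow> real)
     \<Rightarrow> ('m \<Rightarrow> 's pmf) \<Rightarrow> real \<Rightarrow> ('s \<Rightarrow> 'a pmf) \<Rightarrow> real" where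
  "eta pM Mt P r rho0 \<gamma> pol = E_train pM Mt (\<lambda>m. eta_mdp (P m) (r m) (rho0 m) \<gamma> pol)"

definition adv_term :: "'m measure \<Rightarrow> 'm set \<Rightarrow> ('m \<Rightarrow> 's \<Rightarrow> 'a \<Rightarrow> 's pmf) \<Rightarrow> ('m \<Rightarrow> 's \<Rightarrow> 'a \<Rightarrow> real)
     \<Rightarrow> ('m \<Rightarrow> 's pmf) \<Rightarrow> real \<Rightarrow> ('s \<Rightarrow> 'a pmf) \<Rightarrow> ('s \<Rightarrow> 'a pmf) \<Rightarrow> ('s \<Rightarrow> 'a pmf) \<Rightarrow> real" where
  "adv_term pM Mt P r rho0 \<gamma> pol0 visitpol actpol =
     E_train pM Mt (\<lambda>m. visit_exp (P m) visitpol (rho0 m) \<gamma>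
        (\<lambda>s. measure_pmf.expectation (actpol s) (\<lambda>a. Adv (P m) (r m) \<gamma> pol0 s a)))"

definition L_surr :: "'m measure \<Rightarrow> 'm set \<Rightarrow> ('m \<Rightarrow> 's \<Rightarrow> 'a \<Rightarrow> 's pmf) \<Rightarrow> ('m \<Rightarrow> 's \<Rightarrow> 'a \<Rightarrow> real)
     \<Rightarrow> ('m \<Rightarrow> 's pmf) \<Rightarrow> real \<Rightarrow> ('s \<Rightarrow> 'a pmf) \<Rightarrow> ('s \<Rightarrow> 'a pmf) \<Rightarrow> real" where
  "L_surr pM Mt P r rho0 \<gamma> pol pol' =
     eta pM Mt P r rho0 \<gamma> pol + adv_term pM Mt P r rho0 \<gamma> pol pol pol'"

definition tv_dist :: "'a pmf \<Rightarrow> 'a pmf \<Rightarrow> real" where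
  "tv_dist p q = infsum (\<lambda>a. \<bar>pmf p a - pmf q a\<bar>) UNIV / 2"

definition A_max :: "'m measure \<Rightarrow> ('m \<Rightarrow> 's \<Rightarrow> 'a \<Rightarrow> 's pmf) \<Rightarrow> ('m \<Rightarrow> 's \<Rightarrow> 'a \<Rightarrow> real)
     \<Rightarrow> real \<Rightarrow> ('m \<Rightarrow> 'u \<Rightarrow> 's) \<Rightarrow> ('s \<Rightarrow> 'a pmf) \<Rightarrow> real" where
  "A_max pM P r \<gamma> \<phi> pol =
     Sup {\<bar>Adv (P m) (r m) \<gamma> pol s a\<bar> | m s a. m \<in> space pM \<and> s \<in> range (\<phi> m)}"

end

theory Submission
  imports Defs
begin


lemma pmf_integrable_bdd:
  fixes f :: "'a \<Rightarrow> real"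
  assumes "\<forall>x\<in>set_pmf p. \<bar>f x\<bar> \<le> c"
  shows "integrable (measure_pmf p) f"
  using assms by (intro measure_pmf.integrable_const_bound[where B=c]) (auto intro: AE_pmfI)

lemma pmf_exp_cong:
  fixes f g :: "'a \<Rightarrow> real"
  assumes "\<forall>x\<in>set_pmf p. f x = g x"
  shows "measure_pmf.expectation p f = measure_pmf.expectation p g"
  using assms by (intro integral_cong_AE) (auto intro: AE_pmfI)

lemma pmf_exp_bdd:
  fixes f :: "'a \<Rightarrow> real"
  assumes "\<forall>x\<in>set_pmf p. \<bar>f x\<bar> \<le> c"
  shows "\<bar>measure_pmf.expectation p f\<bar> \<le> c"
proof -
  have i: "integrable (measure_pmf p) f" by (rule pmf_integrable_bdd[OF assms])
  have "measure_pmf.expectation p f \<le> measure_pmf.expectation p (\<lambda>_. c)"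
    using assms i by (intro integral_mono_AE) (auto intro!: AE_pmfI)
  moreover have "measure_pmf.expectation p (\<lambda>_. - c) \<le> measure_pmf.expectation p f"
    using assms i by (intro integral_mono_AE) (auto intro!: AE_pmfI)
  ultimately show ?thesis by simp
qed

lemma pmf_exp_bind:
  fixes g :: "'b \<Rightarrow> real"
  assumes "\<forall>y\<in>set_pmf (bind_pmf p f). \<bar>g y\<bar> \<le> c"
  shows "measure_pmf.expectation (bind_pmf p f) g =
         measure_pmf.expectation p (\<lambda>x. measure_pmf.expectation (f x) g)"
proof -
  obtain y0 where "y0 \<in> set_pmf (bind_pmf p f)" using set_pmf_not_empty by fast
  with assms have c0: "0 \<le> c" by force
  define T where "T = set_pmf (bind_pmf p f)"
  define g' where "g' y = (if y \<in> T then g y else 0)" for y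
  have "measure_pmf.expectation (bind_pmf p f) g = measure_pmf.expectation (bind_pmf p f) g'"
    by (intro pmf_exp_cong) (auto simp: g'_def T_def)
  also have "\<dots> = integral\<^sup>L (measure_pmf p \<bind> (\<lambda>x. measure_pmf (f x))) g'"
    by (simp add: measure_pmf_bind)
  also have "\<dots> = measure_pmf.expectation p (\<lambda>x. measure_pmf.expectation (f x) g')"
    apply (rule integral_bind[where K="count_space UNIV" and B=c and B'=1])
    using assms c0 apply (auto simp: g'_def T_def measure_pmf_in_subprob_algebra
       intro!: prob_space_imp_subprob_space measure_pmf.emeasure_space_le_1 measure_pmf.finite_measure)
    done
  also have "\<dots> = measure_pmf.expectation p (\<lambda>x. measure_pmf.expectation (f x) g)"
    by (intro pmf_exp_cong ballI pmf_exp_cong) (auto simp: g'_def T_def)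
  finally show ?thesis .
qed

lemma pmf_exp_has_sum:
  fixes f :: "'a \<Rightarrow> real"
  assumes "\<forall>x\<in>set_pmf p. \<bar>f x\<bar> \<le> c"
  shows "((\<lambda>x. pmf p x * f x) has_sum measure_pmf.expectation p f) UNIV"
    and "(\<lambda>x. \<bar>pmf p x * f x\<bar>) summable_on UNIV"
proof -
  have abs: "Infinite_Set_Sum.abs_summable_on (\<lambda>x. pmf p x * f x) UNIV"
  proof (rule abs_summable_on_comparison_test'[where g="\<lambda>x. c * pmf p x"])
    show "Infinite_Set_Sum.abs_summable_on (\<lambda>x. c * pmf p x) UNIV"
      by (intro abs_summable_on_cmult_right pmf_abs_summable)
    fix x show "norm (pmf p x * f x) \<le> c * pmf p x"
      using assms by (cases "x \<in> set_pmf p") (auto simp: set_pmf_eq abs_mult mult.commute intro: mult_left_mono)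
  qed
  then have "(\<lambda>x. norm (pmf p x * f x)) summable_on UNIV"
    using abs_summable_equivalent[THEN iffD2, OF abs] by simp
  then show "(\<lambda>x. \<bar>pmf p x * f x\<bar>) summable_on UNIV" by simp
  have "measure_pmf.expectation p f = infsum (\<lambda>x. pmf p x * f x) UNIV"
    using pmf_expectation_eq_infsetsum infsetsum_infsum[OF abs] by metis
  moreover have "(\<lambda>x. pmf p x * f x) summable_on UNIV"
    using abs_summable_summable[of "\<lambda>x. pmf p x * f x"] \<open>(\<lambda>x. norm (pmf p x * f x)) summable_on UNIV\<close> by blast
  ultimately show "((\<lambda>x. pmf p x * f x) has_sum measure_pmf.expectation p f) UNIV"
    by simp
qed

lemma pmf_exp_suminf:
  fixes f :: "nat \<Rightarrow> 'a \<Rightarrow> real"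
  assumes "\<forall>x\<in>set_pmf p. \<forall>k. \<bar>f k x\<bar> \<le> c * \<gamma> ^ k" "0 \<le> \<gamma>" "\<gamma> < 1"
  shows "measure_pmf.expectation p (\<lambda>x. \<Sum>k. f k x) = (\<Sum>k. measure_pmf.expectation p (f k))"
proof (rule integral_suminf)
  fix k show "integrable (measure_pmf p) (f k)"
    using assms by (intro pmf_integrable_bdd[where c="c * \<gamma>^k"]) auto
next
  have sg: "summable (\<lambda>k. c * \<gamma> ^ k)"
    using assms by (intro summable_mult summable_geometric) auto
  show "AE x in measure_pmf p. summable (\<lambda>i. norm (f i x))"
    using assms by (intro AE_pmfI summable_comparison_test'[OF sg]) auto
  show "summable (\<lambda>i. measure_pmf.expectation p (\<lambda>x. norm (f i x)))"
  proof (rule summable_comparison_test'[OF sg])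
    fix k show "norm (measure_pmf.expectation p (\<lambda>x. norm (f k x))) \<le> c * \<gamma> ^ k"
      using assms pmf_exp_bdd[of p "\<lambda>x. norm (f k x)" "c * \<gamma>^k"] by auto
  qed
qed

lemma pmf_summable: "(\<lambda>x. pmf p x) summable_on UNIV" and pmf_has_sum: "((\<lambda>x. pmf p x) has_sum 1) UNIV"
proof -
  have "((\<lambda>x. pmf p x * 1) has_sum measure_pmf.expectation p (\<lambda>_. 1::real)) UNIV"
    by (rule pmf_exp_has_sum[where c=1]) auto
  then show "((\<lambda>x. pmf p x) has_sum 1) UNIV" by simp
  then show "(\<lambda>x. pmf p x) summable_on UNIV" using has_sum_imp_summable by blast
qed

lemma tv_summable: "(\<lambda>a. \<bar>pmf p a - pmf q a\<bar>) summable_on UNIV"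
  by (rule summable_on_comparison_test[OF summable_on_add[OF pmf_summable pmf_summable, of p q]])
    (auto simp: abs_le_iff)

lemma tv_nonneg: "0 \<le> tv_dist p q"
  unfolding tv_dist_def by (auto intro: infsum_nonneg)

lemma tv_le1: "tv_dist p q \<le> 1"
proof -
  have "infsum (\<lambda>a. \<bar>pmf p a - pmf q a\<bar>) UNIV \<le> infsum (\<lambda>a. pmf p a + pmf q a) UNIV"
    by (intro infsum_mono tv_summable summable_on_add pmf_summable) (auto simp: abs_le_iff)
  also have "\<dots> = 2"
    using infsum_add[OF pmf_summable pmf_summable, of p q] infsumI[OF pmf_has_sum, of p]
      infsumI[OF pmf_has_sum, of q] by simp
  finally show ?thesis unfolding tv_dist_def by simp
qed

lemma pmf_exp_tv:
  fixes h :: "'a \<Rightarrow> real"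
  assumes "\<forall>a. \<bar>h a\<bar> \<le> c"
  shows "\<bar>measure_pmf.expectation p h - measure_pmf.expectation q h\<bar> \<le> 2 * c * tv_dist p q"
proof -
  have hp: "((\<lambda>x. pmf p x * h x) has_sum measure_pmf.expectation p h) UNIV"
    using assms by (intro pmf_exp_has_sum(1)[where c=c]) auto
  have hq: "((\<lambda>x. - (pmf q x * h x)) has_sum - measure_pmf.expectation q h) UNIV"
    using assms by (intro has_sum_uminusI pmf_exp_has_sum(1)[where c=c]) auto
  have hd: "((\<lambda>x. (pmf p x - pmf q x) * h x) has_sum
      (measure_pmf.expectation p h - measure_pmf.expectation q h)) UNIV"
    using has_sum_add[OF hp hq] by (simp add: algebra_simps)
  have sa: "(\<lambda>x. c * \<bar>pmf p x - pmf q x\<bar>) summable_on UNIV"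
    by (intro summable_on_cmult_right tv_summable)
  have bnd: "norm ((pmf p x - pmf q x) * h x) \<le> c * \<bar>pmf p x - pmf q x\<bar>" for x
    using assms[rule_format, of x] by (simp add: abs_mult mult.commute mult_right_mono)
  have sn: "(\<lambda>x. norm ((pmf p x - pmf q x) * h x)) summable_on UNIV"
    by (rule summable_on_comparison_test[OF sa]) (use bnd in auto)
  have "\<bar>measure_pmf.expectation p h - measure_pmf.expectation q h\<bar>
        = norm (infsum (\<lambda>x. (pmf p x - pmf q x) * h x) UNIV)"
    using infsumI[OF hd] by simp
  also have "\<dots> \<le> infsum (\<lambda>x. norm ((pmf p x - pmf q x) * h x)) UNIV"
    by (rule norm_infsum_bound) (use sn in simp)
  also have "\<dots> \<le> infsum (\<lambda>x. c * \<bar>pmf p x - pmf q x\<bar>) UNIV"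
    by (intro infsum_mono sn sa bnd)
  also have "\<dots> = c * infsum (\<lambda>x. \<bar>pmf p x - pmf q x\<bar>) UNIV"
    by (intro infsum_cmult_right tv_summable)
  also have "\<dots> = 2 * c * tv_dist p q" unfolding tv_dist_def by simp
  finally show ?thesis .
qed



lemma geo_bound:
  fixes f :: "nat \<Rightarrow> real"
  assumes "\<And>k. \<bar>f k\<bar> \<le> c * \<gamma> ^ k" "0 \<le> \<gamma>" "\<gamma> < 1"
  shows "summable f" "\<bar>suminf f\<bar> \<le> c / (1 - \<gamma>)"
proof -
  have sg: "summable (\<lambda>k. c * \<gamma> ^ k)"
    using assms by (intro summable_mult summable_geometric) auto
  show sf: "summable f" using assms by (intro summable_comparison_test'[OF sg]) auto
  have sa: "summable (\<lambda>k. \<bar>f k\<bar>)" using assms by (intro summable_comparison_test'[OF sg]) auto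
  have "\<bar>suminf f\<bar> \<le> (\<Sum>k. \<bar>f k\<bar>)" by (rule summable_rabs[OF sa])
  also have "\<dots> \<le> (\<Sum>k. c * \<gamma> ^ k)" by (intro suminf_le sa sg assms)
  also have "\<dots> = c / (1 - \<gamma>)" using assms by (simp add: suminf_mult suminf_geometric divide_simps)
  finally show "\<bar>suminf f\<bar> \<le> c / (1 - \<gamma>)" .
qed

locale mdp =
  fixes P :: "'s \<Rightarrow> 'a \<Rightarrow> 's pmf" and r :: "'s \<Rightarrow> 'a \<Rightarrow> real" and \<gamma> :: real
    and S :: "'s set" and B :: real
  assumes gam: "0 < \<gamma>" "\<gamma> < 1"
    and closed: "\<And>s a. s \<in> S \<Longrightarrow> set_pmf (P s a) \<subseteq> S"
    and rbnd: "\<And>s a. s \<in> S \<Longrightarrow> \<bar>r s a\<bar> \<le> B"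
    and B0: "0 \<le> B"
begin

definition CQ where "CQ = B / (1 - \<gamma>)"

lemma CQ0: "0 \<le> CQ" using gam B0 by (simp add: CQ_def)

lemma sa_support: "s \<in> S \<Longrightarrow> x \<in> set_pmf (sa_dist P \<sigma> s a k) \<Longrightarrow> fst x \<in> S"
proof (induction k arbitrary: x)
  case 0 then show ?case by simp
next
  case (Suc k)
  then show ?case using closed
    by (auto simp: step_sa_def set_bind_pmf) (metis subsetD)
qed

lemma sd_support: "set_pmf \<rho> \<subseteq> S \<Longrightarrow> set_pmf (state_dist P \<sigma> \<rho> t) \<subseteq> S"
proof (induction t)
  case (Suc t)
  then show ?case using closed by (fastforce simp: set_bind_pmf)
qed simp

definition er where "er \<sigma> k s a = measure_pmf.expectation (sa_dist P \<sigma> s a k) (\<lambda>x. r (fst x) (snd x))"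

lemma er_bnd: "s \<in> S \<Longrightarrow> \<bar>er \<sigma> k s a\<bar> \<le> B"
  unfolding er_def by (intro pmf_exp_bdd) (auto intro: rbnd sa_support)

lemma Q_eq: "Qfun P r \<gamma> \<sigma> s a = (\<Sum>k. \<gamma> ^ k * er \<sigma> k s a)"
  unfolding Qfun_def er_def ..

lemma Q_bnd: "s \<in> S \<Longrightarrow> \<bar>Qfun P r \<gamma> \<sigma> s a\<bar> \<le> CQ"
  unfolding Q_eq CQ_def using gam er_bnd
  by (intro geo_bound(2)) (auto simp: abs_mult mult.commute intro!: mult_left_mono)

lemma V_bnd: "s \<in> S \<Longrightarrow> \<bar>Vfun P r \<gamma> \<sigma> s\<bar> \<le> CQ"
  unfolding Vfun_def by (intro pmf_exp_bdd) (auto intro: Q_bnd)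

lemma A_bnd: "s \<in> S \<Longrightarrow> \<bar>Adv P r \<gamma> \<sigma> s a\<bar> \<le> 2 * CQ"
  unfolding Adv_def using Q_bnd[of s \<sigma> a] V_bnd[of s \<sigma>] by linarith

lemma sa_dist_Suc':
  "sa_dist P \<sigma> s a (Suc k) = bind_pmf (P s a) (\<lambda>s'. bind_pmf (\<sigma> s') (\<lambda>a'. sa_dist P \<sigma> s' a' k))"
proof (induction k)
  case 0
  then show ?case by (simp add: step_sa_def map_pmf_def bind_return_pmf)
next
  case (Suc k)
  have "sa_dist P \<sigma> s a (Suc (Suc k)) = bind_pmf (sa_dist P \<sigma> s a (Suc k)) (step_sa P \<sigma>)" by simp
  also have "\<dots> = bind_pmf (P s a) (\<lambda>s'. bind_pmf (\<sigma> s') (\<lambda>a'. sa_dist P \<sigma> s' a' (Suc k)))"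
    unfolding Suc by (simp add: bind_assoc_pmf)
  finally show ?case .
qed

lemma er_Suc:
  assumes "s \<in> S"
  shows "er \<sigma> (Suc k) s a = measure_pmf.expectation (P s a)
            (\<lambda>s'. measure_pmf.expectation (\<sigma> s') (\<lambda>a'. er \<sigma> k s' a'))"
proof -
  have "er \<sigma> (Suc k) s a = measure_pmf.expectation
     (bind_pmf (P s a) (\<lambda>s'. bind_pmf (\<sigma> s') (\<lambda>a'. sa_dist P \<sigma> s' a' k))) (\<lambda>x. r (fst x) (snd x))"
    unfolding er_def sa_dist_Suc' ..
  also have "\<dots> = measure_pmf.expectation (P s a) (\<lambda>s'. measure_pmf.expectation
     (bind_pmf (\<sigma> s') (\<lambda>a'. sa_dist P \<sigma> s' a' k)) (\<lambda>x. r (fst x) (snd x)))"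
    apply (rule pmf_exp_bind[where c=B])
    using sa_support[OF assms, of _ \<sigma> a "Suc k"] rbnd unfolding sa_dist_Suc' by auto
  also have "\<dots> = measure_pmf.expectation (P s a)
            (\<lambda>s'. measure_pmf.expectation (\<sigma> s') (\<lambda>a'. er \<sigma> k s' a'))"
  proof (intro pmf_exp_cong ballI)
    fix s' assume "s' \<in> set_pmf (P s a)"
    then have s': "s' \<in> S" using closed assms by auto
    show "measure_pmf.expectation (bind_pmf (\<sigma> s') (\<lambda>a'. sa_dist P \<sigma> s' a' k)) (\<lambda>x. r (fst x) (snd x))
        = measure_pmf.expectation (\<sigma> s') (\<lambda>a'. er \<sigma> k s' a')"
      unfolding er_def
      by (rule pmf_exp_bind[where c=B]) (use sa_support[OF s'] rbnd in auto)
  qed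
  finally show ?thesis .
qed

lemma Q_bellman:
  assumes "s \<in> S"
  shows "Qfun P r \<gamma> \<sigma> s a = r s a + \<gamma> * measure_pmf.expectation (P s a) (Vfun P r \<gamma> \<sigma>)"
proof -
  have summ: "summable (\<lambda>k. \<gamma> ^ k * er \<sigma> k s a)"
    using gam er_bnd[OF assms] by (intro geo_bound(1)[where c=B and \<gamma>=\<gamma>])
      (auto simp: abs_mult mult.commute intro!: mult_left_mono)
  have erS: "\<And>s' a' k. s' \<in> set_pmf (P s a) \<Longrightarrow> \<bar>er \<sigma> k s' a'\<bar> \<le> B"
    using closed assms er_bnd by blast
  have "Qfun P r \<gamma> \<sigma> s a = er \<sigma> 0 s a + (\<Sum>k. \<gamma> ^ Suc k * er \<sigma> (Suc k) s a)"
    unfolding Q_eq using suminf_split_head[OF summ] by simp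
  also have "er \<sigma> 0 s a = r s a" by (simp add: er_def)
  also have "(\<Sum>k. \<gamma> ^ Suc k * er \<sigma> (Suc k) s a) = (\<Sum>k. \<gamma> * measure_pmf.expectation (P s a)
            (\<lambda>s'. measure_pmf.expectation (\<sigma> s') (\<lambda>a'. \<gamma> ^ k * er \<sigma> k s' a')))"
    by (simp add: er_Suc[OF assms] mult.assoc)
  also have "\<dots> = \<gamma> * (\<Sum>k. measure_pmf.expectation (P s a)
            (\<lambda>s'. measure_pmf.expectation (\<sigma> s') (\<lambda>a'. \<gamma> ^ k * er \<sigma> k s' a')))"
  proof (rule suminf_mult)
    show "summable (\<lambda>k. measure_pmf.expectation (P s a)
            (\<lambda>s'. measure_pmf.expectation (\<sigma> s') (\<lambda>a'. \<gamma> ^ k * er \<sigma> k s' a')))"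
      using gam by (intro geo_bound(1)[where c=B and \<gamma>=\<gamma>] pmf_exp_bdd ballI)
        (use erS in \<open>auto simp: abs_mult mult.commute intro!: mult_left_mono\<close>)
  qed
  also have "(\<Sum>k. measure_pmf.expectation (P s a)
            (\<lambda>s'. measure_pmf.expectation (\<sigma> s') (\<lambda>a'. \<gamma> ^ k * er \<sigma> k s' a')))
     = measure_pmf.expectation (P s a) (\<lambda>s'. \<Sum>k. 
            measure_pmf.expectation (\<sigma> s') (\<lambda>a'. \<gamma> ^ k * er \<sigma> k s' a'))"
    using gam by (intro pmf_exp_suminf[where c=B and \<gamma>=\<gamma>, symmetric] pmf_exp_bdd ballI allI)
        (use erS in \<open>auto simp: abs_mult mult.commute intro!: mult_left_mono\<close>)
  also have "\<dots> = measure_pmf.expectation (P s a) (Vfun P r \<gamma> \<sigma>)"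
  proof (intro pmf_exp_cong ballI)
    fix s' assume "s' \<in> set_pmf (P s a)"
    then have s': "s' \<in> S" using closed assms by auto
    show "(\<Sum>k. measure_pmf.expectation (\<sigma> s') (\<lambda>a'. \<gamma> ^ k * er \<sigma> k s' a')) = Vfun P r \<gamma> \<sigma> s'"
      unfolding Vfun_def Q_eq
      using gam by (intro pmf_exp_suminf[where c=B and \<gamma>=\<gamma>, symmetric] ballI allI)
        (use s' er_bnd in \<open>auto simp: abs_mult mult.commute intro!: mult_left_mono\<close>)
  qed
  finally show ?thesis .
qed


lemma Abar_eq:
  assumes "s \<in> S"
  shows "measure_pmf.expectation (\<tau> s) (\<lambda>a. Adv P r \<gamma> \<sigma> s a)
    = measure_pmf.expectation (\<tau> s) (\<lambda>a. r s a)
      + \<gamma> * measure_pmf.expectation (bind_pmf (\<tau> s) (P s)) (Vfun P r \<gamma> \<sigma>) - Vfun P r \<gamma> \<sigma> s"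
proof -
  have VS: "\<And>a s'. s' \<in> set_pmf (P s a) \<Longrightarrow> \<bar>Vfun P r \<gamma> \<sigma> s'\<bar> \<le> CQ"
    using closed assms V_bnd by blast
  have i1: "integrable (measure_pmf (\<tau> s)) (\<lambda>a. r s a)"
    by (rule pmf_integrable_bdd[where c=B]) (use rbnd assms in auto)
  have i2: "integrable (measure_pmf (\<tau> s)) (\<lambda>a. \<gamma> * measure_pmf.expectation (P s a) (Vfun P r \<gamma> \<sigma>))"
    by (rule pmf_integrable_bdd[where c="\<gamma> * CQ"])
       (use gam VS in \<open>auto simp: abs_mult intro!: mult_left_mono pmf_exp_bdd\<close>)
  have "measure_pmf.expectation (\<tau> s) (\<lambda>a. Adv P r \<gamma> \<sigma> s a)
     = measure_pmf.expectation (\<tau> s) (\<lambda>a. (r s a + \<gamma> * measure_pmf.expectation (P s a) (Vfun P r \<gamma> \<sigma>))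
          - Vfun P r \<gamma> \<sigma> s)"
    by (intro pmf_exp_cong) (simp add: Adv_def Q_bellman[OF assms])
  also have "\<dots> = measure_pmf.expectation (\<tau> s) (\<lambda>a. r s a)
     + measure_pmf.expectation (\<tau> s) (\<lambda>a. \<gamma> * measure_pmf.expectation (P s a) (Vfun P r \<gamma> \<sigma>))
     - Vfun P r \<gamma> \<sigma> s"
    using i1 i2 by (simp add: Bochner_Integration.integral_diff Bochner_Integration.integral_add)
  also have "measure_pmf.expectation (\<tau> s) (\<lambda>a. \<gamma> * measure_pmf.expectation (P s a) (Vfun P r \<gamma> \<sigma>))
     = \<gamma> * measure_pmf.expectation (bind_pmf (\<tau> s) (P s)) (Vfun P r \<gamma> \<sigma>)"
    using pmf_exp_bind[where c=CQ and p="\<tau> s" and f="P s" and g="Vfun P r \<gamma> \<sigma>"] VS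
    by (auto simp: set_bind_pmf)
  finally show ?thesis .
qed

lemma tele:
  assumes "set_pmf \<rho> \<subseteq> S" "\<forall>s\<in>S. \<bar>g s\<bar> \<le> c"
  shows "(\<lambda>t. \<gamma> ^ t * (\<gamma> * measure_pmf.expectation (state_dist P \<tau> \<rho> (Suc t)) g
            - measure_pmf.expectation (state_dist P \<tau> \<rho> t) g)) sums (- measure_pmf.expectation \<rho> g)"
proof -
  define E where "E t = measure_pmf.expectation (state_dist P \<tau> \<rho> t) g" for t
  have ps: "(\<Sum>t<n. \<gamma> ^ t * (\<gamma> * E (Suc t) - E t)) = \<gamma> ^ n * E n - E 0" for n
    by (induction n) (auto simp: algebra_simps)
  have Eb: "\<bar>E n\<bar> \<le> c" for n
    unfolding E_def by (intro pmf_exp_bdd) (use sd_support[OF assms(1)] assms(2) in blast)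
  have "(\<lambda>n. \<gamma> ^ n * E n) \<longlonglongrightarrow> 0"
  proof (rule Lim_null_comparison[where g="\<lambda>n. c * \<gamma> ^ n"])
    show "\<forall>\<^sub>F n in sequentially. norm (\<gamma> ^ n * E n) \<le> c * \<gamma> ^ n"
      using Eb gam by (auto simp: abs_mult mult.commute intro!: mult_left_mono)
    show "(\<lambda>n. c * \<gamma> ^ n) \<longlonglongrightarrow> 0"
      using gam by (intro tendsto_mult_right_zero LIMSEQ_power_zero) auto
  qed
  then have "(\<lambda>n. \<gamma> ^ n * E n - E 0) \<longlonglongrightarrow> 0 - E 0" by (intro tendsto_diff) auto
  then show ?thesis unfolding sums_def E_def[symmetric] ps by (simp add: E_def)
qed

lemma adv_sums:
  assumes "set_pmf \<rho> \<subseteq> S"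
  shows "(\<lambda>t. \<gamma> ^ t * measure_pmf.expectation (state_dist P \<tau> \<rho> t)
            (\<lambda>s. measure_pmf.expectation (\<tau> s) (\<lambda>a. Adv P r \<gamma> \<sigma> s a)))
         sums (eta_mdp P r \<rho> \<gamma> \<tau> - measure_pmf.expectation \<rho> (Vfun P r \<gamma> \<sigma>))"
proof -
  define sd where "sd t = state_dist P \<tau> \<rho> t" for t
  define R where "R s = measure_pmf.expectation (\<tau> s) (\<lambda>a. r s a)" for s
  define V where "V = Vfun P r \<gamma> \<sigma>"
  have supp: "\<And>t. set_pmf (sd t) \<subseteq> S" unfolding sd_def by (rule sd_support[OF assms])
  have Rb: "\<And>s. s \<in> S \<Longrightarrow> \<bar>R s\<bar> \<le> B" unfolding R_def by (intro pmf_exp_bdd) (auto intro: rbnd)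
  have Vb: "\<And>s. s \<in> S \<Longrightarrow> \<bar>V s\<bar> \<le> CQ" unfolding V_def by (rule V_bnd)
  have NVb: "\<And>s. s \<in> S \<Longrightarrow> \<bar>measure_pmf.expectation (bind_pmf (\<tau> s) (P s)) V\<bar> \<le> CQ"
    by (intro pmf_exp_bdd) (use closed Vb in \<open>auto simp: set_bind_pmf\<close>)
  have step: "measure_pmf.expectation (sd t) (\<lambda>s. measure_pmf.expectation (\<tau> s) (\<lambda>a. Adv P r \<gamma> \<sigma> s a))
     = measure_pmf.expectation (sd t) R + (\<gamma> * measure_pmf.expectation (sd (Suc t)) V
        - measure_pmf.expectation (sd t) V)" for t
  proof -
    have "measure_pmf.expectation (sd t) (\<lambda>s. measure_pmf.expectation (\<tau> s) (\<lambda>a. Adv P r \<gamma> \<sigma> s a))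
      = measure_pmf.expectation (sd t) (\<lambda>s. R s + \<gamma> * measure_pmf.expectation (bind_pmf (\<tau> s) (P s)) V - V s)"
      by (intro pmf_exp_cong ballI) (auto simp: R_def V_def intro!: Abar_eq dest: subsetD[OF supp])
    also have "\<dots> = measure_pmf.expectation (sd t) R
       + \<gamma> * measure_pmf.expectation (sd t) (\<lambda>s. measure_pmf.expectation (bind_pmf (\<tau> s) (P s)) V)
       - measure_pmf.expectation (sd t) V"
    proof -
      have i1: "integrable (sd t) R" by (rule pmf_integrable_bdd[where c=B]) (use supp Rb in blast)
      have i2: "integrable (sd t) (\<lambda>s. \<gamma> * measure_pmf.expectation (bind_pmf (\<tau> s) (P s)) V)"
        by (rule pmf_integrable_bdd[where c="\<gamma> * CQ"])
          (use supp NVb gam in \<open>auto simp: abs_mult intro!: mult_left_mono\<close>)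
      have i3: "integrable (sd t) V" by (rule pmf_integrable_bdd[where c=CQ]) (use supp Vb in blast)
      show ?thesis using i1 i2 i3
        by (simp add: Bochner_Integration.integral_diff Bochner_Integration.integral_add)
    qed
    also have "measure_pmf.expectation (sd t) (\<lambda>s. measure_pmf.expectation (bind_pmf (\<tau> s) (P s)) V)
       = measure_pmf.expectation (sd (Suc t)) V"
      unfolding sd_def state_dist.simps
      by (rule pmf_exp_bind[where c=CQ, symmetric])
        (use sd_support[OF assms, of \<tau> "Suc t"] Vb in auto)
    finally show ?thesis by simp
  qed
  have s1: "(\<lambda>t. \<gamma> ^ t * measure_pmf.expectation (sd t) R) sums eta_mdp P r \<rho> \<gamma> \<tau>"
  proof -
    have "summable (\<lambda>t. \<gamma> ^ t * measure_pmf.expectation (sd t) R)"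
      using gam by (intro geo_bound(1)[where c=B and \<gamma>=\<gamma>])
        (auto simp: abs_mult mult.commute intro!: mult_left_mono pmf_exp_bdd dest!: subsetD[OF supp] Rb)
    then show ?thesis unfolding eta_mdp_def sd_def R_def by (simp add: summable_sums)
  qed
  have s2: "(\<lambda>t. \<gamma> ^ t * (\<gamma> * measure_pmf.expectation (sd (Suc t)) V - measure_pmf.expectation (sd t) V))
      sums (- measure_pmf.expectation \<rho> V)"
    unfolding sd_def by (rule tele[OF assms, where c=CQ]) (use Vb in blast)
  have fe: "(\<lambda>t. \<gamma> ^ t * measure_pmf.expectation (sd t)
            (\<lambda>s. measure_pmf.expectation (\<tau> s) (\<lambda>a. Adv P r \<gamma> \<sigma> s a)))
    = (\<lambda>t. \<gamma> ^ t * measure_pmf.expectation (sd t) R + \<gamma> ^ t * (\<gamma> * measure_pmf.expectation (sd (Suc t)) V - measure_pmf.expectation (sd t) V))"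
    by (intro ext) (simp only: step distrib_left)
  show ?thesis
    using sums_add[OF s1 s2] fe unfolding sd_def V_def by simp
qed

lemma eta_V:
  assumes "set_pmf \<rho> \<subseteq> S"
  shows "eta_mdp P r \<rho> \<gamma> \<sigma> = measure_pmf.expectation \<rho> (Vfun P r \<gamma> \<sigma>)"
proof -
  have z: "measure_pmf.expectation (\<sigma> s) (\<lambda>a. Adv P r \<gamma> \<sigma> s a) = 0" if "s \<in> S" for s
  proof -
    have "integrable (measure_pmf (\<sigma> s)) (\<lambda>a. Qfun P r \<gamma> \<sigma> s a)"
      by (rule pmf_integrable_bdd[where c=CQ]) (use Q_bnd that in blast)
    then show ?thesis unfolding Adv_def
      by (simp add: Bochner_Integration.integral_diff Vfun_def)
  qed
  have "(\<lambda>t. 0) sums (eta_mdp P r \<rho> \<gamma> \<sigma> - measure_pmf.expectation \<rho> (Vfun P r \<gamma> \<sigma>))"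
  proof -
    have "(\<lambda>t. \<gamma> ^ t * measure_pmf.expectation (state_dist P \<sigma> \<rho> t)
            (\<lambda>s. measure_pmf.expectation (\<sigma> s) (\<lambda>a. Adv P r \<gamma> \<sigma> s a))) = (\<lambda>t. 0)"
      using sd_support[OF assms] z by (intro ext) (simp add: pmf_exp_cong[where g="\<lambda>_. 0"] subset_iff)
    then show ?thesis using adv_sums[OF assms, of \<sigma> \<sigma>] by simp
  qed
  then show ?thesis using sums_zero sums_unique2 by fastforce
qed

end


lemma gpow_le: "\<bar>x\<bar> \<le> c \<Longrightarrow> 0 \<le> (g::real) \<Longrightarrow> \<bar>g ^ k * x\<bar> \<le> c * g ^ k"
proof -
  assume a: "\<bar>x\<bar> \<le> c" "0 \<le> g"
  have "\<bar>g ^ k * x\<bar> = g ^ k * \<bar>x\<bar>" using a by (simp add: abs_mult)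
  also have "\<dots> \<le> g ^ k * c" using a by (intro mult_left_mono) auto
  finally show ?thesis by (simp add: mult.commute)
qed

context mdp begin

lemma visit_exp_eq:
  assumes "set_pmf \<rho> \<subseteq> S" "\<forall>s\<in>S. \<bar>f s\<bar> \<le> c"
  shows "visit_exp P \<tau> \<rho> \<gamma> f = (\<Sum>t. \<gamma> ^ t * measure_pmf.expectation (state_dist P \<tau> \<rho> t) f)"
    and "summable (\<lambda>t. \<gamma> ^ t * measure_pmf.expectation (state_dist P \<tau> \<rho> t) f)"
proof -
  define p where "p t = state_dist P \<tau> \<rho> t" for t
  define h where "h t s = \<gamma> ^ t * (pmf (p t) s * f s)" for t s
  have supp: "\<And>t. set_pmf (p t) \<subseteq> S" unfolding p_def by (rule sd_support[OF assms(1)])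
  have fb: "\<And>t. \<forall>s\<in>set_pmf (p t). \<bar>f s\<bar> \<le> c" using supp assms(2) by blast
  have fb': "\<And>t. \<forall>s\<in>set_pmf (p t). \<bar>\<bar>f s\<bar>\<bar> \<le> c" using fb by simp
  have Eb: "\<And>t. \<bar>measure_pmf.expectation (p t) f\<bar> \<le> c" using fb by (rule pmf_exp_bdd)
  have Eab: "\<And>t. \<bar>measure_pmf.expectation (p t) (\<lambda>s. \<bar>f s\<bar>)\<bar> \<le> c" using fb' by (rule pmf_exp_bdd)
  have g0: "0 \<le> \<gamma>" "\<gamma> < 1" using gam by auto
  have sumE: "summable (\<lambda>t. \<gamma> ^ t * measure_pmf.expectation (p t) f)"
    and sumEn: "summable (\<lambda>t. norm (\<gamma> ^ t * measure_pmf.expectation (p t) f))"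
    using Eb g0 by (auto intro!: geo_bound(1)[where c=c and \<gamma>=\<gamma>] gpow_le simp del: abs_mult)
  then show "summable (\<lambda>t. \<gamma> ^ t * measure_pmf.expectation (state_dist P \<tau> \<rho> t) f)"
    unfolding p_def by blast
  have abs_sum: "(\<lambda>(t, s). \<bar>h t s\<bar>) summable_on (UNIV \<times> UNIV)"
  proof -
    have "(\<lambda>x. (\<lambda>(t, s). \<bar>h t s\<bar>) x) summable_on Sigma UNIV (\<lambda>_. UNIV)"
    proof (rule summable_on_SigmaI[where g="\<lambda>t. \<gamma> ^ t * measure_pmf.expectation (p t) (\<lambda>s. \<bar>f s\<bar>)"])
      fix t :: nat
      have "((\<lambda>s. pmf (p t) s * \<bar>f s\<bar>) has_sum measure_pmf.expectation (p t) (\<lambda>s. \<bar>f s\<bar>)) UNIV"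
        by (rule pmf_exp_has_sum(1)[OF fb'])
      then have "((\<lambda>s. \<gamma> ^ t * (pmf (p t) s * \<bar>f s\<bar>)) has_sum
          \<gamma> ^ t * measure_pmf.expectation (p t) (\<lambda>s. \<bar>f s\<bar>)) UNIV"
        by (rule has_sum_cmult_right)
      then show "((\<lambda>s. (\<lambda>(t, s). \<bar>h t s\<bar>) (t, s)) has_sum
          \<gamma> ^ t * measure_pmf.expectation (p t) (\<lambda>s. \<bar>f s\<bar>)) UNIV"
        using g0 by (simp add: h_def abs_mult)
    next
      have "summable (\<lambda>t. \<gamma> ^ t * measure_pmf.expectation (p t) (\<lambda>s. \<bar>f s\<bar>))"
        using Eab g0 by (intro geo_bound(1)[where c=c and \<gamma>=\<gamma>] gpow_le) auto
      moreover have "\<And>t. 0 \<le> \<gamma> ^ t * measure_pmf.expectation (p t) (\<lambda>s. \<bar>f s\<bar>)"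
        using g0 by auto
      ultimately show "(\<lambda>t. \<gamma> ^ t * measure_pmf.expectation (p t) (\<lambda>s. \<bar>f s\<bar>)) summable_on UNIV"
        by (subst summable_on_UNIV_nonneg_real_iff) auto
    qed auto
    then show ?thesis by simp
  qed
  have hsum: "(\<lambda>(t, s). h t s) summable_on (UNIV \<times> UNIV)"
    using abs_summable_summable[of "\<lambda>(t, s). h t s"] abs_sum by (simp add: case_prod_unfold)
  have "infsum (\<lambda>t. infsum (\<lambda>s. h t s) UNIV) UNIV = infsum (\<lambda>s. infsum (\<lambda>t. h t s) UNIV) UNIV"
    by (rule infsum_swap_banach[OF hsum])
  moreover have "infsum (\<lambda>t. infsum (\<lambda>s. h t s) UNIV) UNIV = (\<Sum>t. \<gamma> ^ t * measure_pmf.expectation (p t) f)"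
  proof -
    have "infsum (\<lambda>s. h t s) UNIV = \<gamma> ^ t * measure_pmf.expectation (p t) f" for t
      unfolding h_def by (intro infsumI has_sum_cmult_right pmf_exp_has_sum(1)[OF fb])
    moreover have "((\<lambda>t. \<gamma> ^ t * measure_pmf.expectation (p t) f) has_sum
        (\<Sum>t. \<gamma> ^ t * measure_pmf.expectation (p t) f)) UNIV"
      by (intro norm_summable_imp_has_sum sumEn summable_sums sumE)
    ultimately show ?thesis by (simp add: infsumI)
  qed
  moreover have "infsum (\<lambda>t. h t s) UNIV = visit P \<tau> \<rho> \<gamma> s * f s" for s
  proof -
    have pb: "\<bar>\<gamma> ^ t * pmf (p t) s\<bar> \<le> 1 * \<gamma> ^ t" for t
      using g0 pmf_le_1[of "p t" s] mult_left_mono[of "pmf (p t) s" 1 "\<gamma>^t"] by (auto simp: abs_mult)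
    have "summable (\<lambda>t. \<gamma> ^ t * pmf (p t) s)"
      by (rule geo_bound(1)[where c=1 and \<gamma>=\<gamma>]) (use pb g0 in auto)
    then have "(\<lambda>t. \<gamma> ^ t * pmf (p t) s) sums visit P \<tau> \<rho> \<gamma> s"
      unfolding visit_def p_def by (simp add: summable_sums)
    then have "(\<lambda>t. h t s) sums (visit P \<tau> \<rho> \<gamma> s * f s)"
      unfolding h_def using sums_mult2[of _ _ "f s"] by (metis (no_types, lifting) mult.assoc sums_cong)
    moreover have "summable (\<lambda>t. norm (h t s))"
    proof -
      have sg: "summable (\<lambda>t. \<bar>f s\<bar> * \<gamma> ^ t)" using g0 by (intro summable_mult summable_geometric) auto
      have "norm (h t s) \<le> \<bar>f s\<bar> * \<gamma> ^ t" for t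
      proof -
        have "norm (h t s) = \<bar>\<gamma> ^ t * pmf (p t) s\<bar> * \<bar>f s\<bar>" unfolding h_def by (simp add: abs_mult)
        also have "\<dots> \<le> (1 * \<gamma> ^ t) * \<bar>f s\<bar>" by (intro mult_right_mono pb) auto
        finally show ?thesis by (simp add: mult.commute)
      qed
      then show ?thesis by (intro summable_comparison_test'[OF sg]) simp
    qed
    ultimately show ?thesis by (intro infsumI norm_summable_imp_has_sum)
  qed
  ultimately show "visit_exp P \<tau> \<rho> \<gamma> f = (\<Sum>t. \<gamma> ^ t * measure_pmf.expectation (state_dist P \<tau> \<rho> t) f)"
    unfolding visit_exp_def p_def by simp
qed


lemma Adv_mean0:
  assumes "s \<in> S"
  shows "measure_pmf.expectation (\<sigma> s) (\<lambda>a. Adv P r \<gamma> \<sigma> s a) = 0"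
proof -
  have "integrable (measure_pmf (\<sigma> s)) (\<lambda>a. Qfun P r \<gamma> \<sigma> s a)"
    by (rule pmf_integrable_bdd[where c=CQ]) (use Q_bnd assms in blast)
  then show ?thesis unfolding Adv_def
    by (simp add: Bochner_Integration.integral_diff Vfun_def)
qed

lemma sd_diff:
  assumes rho: "set_pmf \<rho> \<subseteq> S" and tv: "\<forall>s\<in>S. tv_dist (\<pi> s) (\<pi>' s) \<le> \<alpha>" and c0: "0 \<le> c"
    and gb: "\<forall>s\<in>S. \<bar>g s\<bar> \<le> c"
  shows "\<bar>measure_pmf.expectation (state_dist P \<pi>' \<rho> t) g
          - measure_pmf.expectation (state_dist P \<pi> \<rho> t) g\<bar> \<le> 2 * real t * \<alpha> * c"
  using gb c0
proof (induction t arbitrary: g c)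
  case 0
  then show ?case by simp
next
  case (Suc t)
  define G' where "G' s = measure_pmf.expectation (bind_pmf (\<pi>' s) (P s)) g" for s
  define G where "G s = measure_pmf.expectation (bind_pmf (\<pi> s) (P s)) g" for s
  have e1: "measure_pmf.expectation (state_dist P \<pi>' \<rho> (Suc t)) g
      = measure_pmf.expectation (state_dist P \<pi>' \<rho> t) G'"
    unfolding state_dist.simps G'_def
    by (rule pmf_exp_bind[where c=c]) (use sd_support[OF rho, of \<pi>' "Suc t"] Suc.prems in auto)
  have e2: "measure_pmf.expectation (state_dist P \<pi> \<rho> (Suc t)) g
      = measure_pmf.expectation (state_dist P \<pi> \<rho> t) G"
    unfolding state_dist.simps G_def
    by (rule pmf_exp_bind[where c=c]) (use sd_support[OF rho, of \<pi> "Suc t"] Suc.prems in auto)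
  have GS: "\<forall>s\<in>S. \<bar>G s\<bar> \<le> c" "\<forall>s\<in>S. \<bar>G' s\<bar> \<le> c"
    unfolding G_def G'_def using closed Suc.prems
    by (auto intro!: pmf_exp_bdd simp: set_bind_pmf) (meson subsetD)+
  have Gd: "\<bar>G' s - G s\<bar> \<le> 2 * c * \<alpha>" if s: "s \<in> S" for s
  proof -
    define h where "h a = measure_pmf.expectation (P s a) g" for a
    have hb: "\<forall>a. \<bar>h a\<bar> \<le> c" unfolding h_def using closed s Suc.prems
      by (auto intro!: pmf_exp_bdd)
    have "G s = measure_pmf.expectation (\<pi> s) h" unfolding G_def h_def
      by (rule pmf_exp_bind[where c=c]) (use closed s Suc.prems in \<open>auto simp: set_bind_pmf\<close>)
    moreover have "G' s = measure_pmf.expectation (\<pi>' s) h" unfolding G'_def h_def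
      by (rule pmf_exp_bind[where c=c]) (use closed s Suc.prems in \<open>auto simp: set_bind_pmf\<close>)
    ultimately have "\<bar>G' s - G s\<bar> \<le> 2 * c * tv_dist (\<pi> s) (\<pi>' s)"
      using pmf_exp_tv[OF hb, of "\<pi> s" "\<pi>' s"] by (simp add: abs_minus_commute)
    also have "\<dots> \<le> 2 * c * \<alpha>" using tv s Suc.prems by (intro mult_left_mono) auto
    finally show ?thesis .
  qed
  have supp': "set_pmf (state_dist P \<pi>' \<rho> t) \<subseteq> S" by (rule sd_support[OF rho])
  have IH: "\<bar>measure_pmf.expectation (state_dist P \<pi>' \<rho> t) G
          - measure_pmf.expectation (state_dist P \<pi> \<rho> t) G\<bar> \<le> 2 * real t * \<alpha> * c"
    using Suc.IH[OF GS(1) Suc.prems(2)] .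
  have "measure_pmf.expectation (state_dist P \<pi>' \<rho> t) G' - measure_pmf.expectation (state_dist P \<pi>' \<rho> t) G
      = measure_pmf.expectation (state_dist P \<pi>' \<rho> t) (\<lambda>s. G' s - G s)"
  proof -
    have "integrable (state_dist P \<pi>' \<rho> t) G'" by (rule pmf_integrable_bdd[where c=c]) (use GS supp' in blast)
    moreover have "integrable (state_dist P \<pi>' \<rho> t) G" by (rule pmf_integrable_bdd[where c=c]) (use GS supp' in blast)
    ultimately show ?thesis by (simp add: Bochner_Integration.integral_diff)
  qed
  moreover have "\<bar>measure_pmf.expectation (state_dist P \<pi>' \<rho> t) (\<lambda>s. G' s - G s)\<bar> \<le> 2 * c * \<alpha>"
    by (rule pmf_exp_bdd) (use Gd supp' in blast)
  ultimately have "\<bar>measure_pmf.expectation (state_dist P \<pi>' \<rho> t) G' - measure_pmf.expectation (state_dist P \<pi>' \<rho> t) G\<bar>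
      \<le> 2 * c * \<alpha>" by simp
  with IH have "\<bar>measure_pmf.expectation (state_dist P \<pi>' \<rho> t) G' - measure_pmf.expectation (state_dist P \<pi> \<rho> t) G\<bar>
      \<le> 2 * real t * \<alpha> * c + 2 * c * \<alpha>" by linarith
  then show ?case unfolding e1 e2 by (simp add: algebra_simps)
qed

lemma t_geom_sums: "(\<lambda>t. real t * \<gamma> ^ t) sums (\<gamma> / (1 - \<gamma>)^2)"
proof -
  have "(\<lambda>n. of_nat (Suc n) * \<gamma> ^ n) sums (1 / (1 - \<gamma>)^2)"
    using gam by (intro geometric_deriv_sums) auto
  then have "(\<lambda>n. \<gamma> * (of_nat (Suc n) * \<gamma> ^ n)) sums (\<gamma> * (1 / (1 - \<gamma>)^2))"
    by (rule sums_mult)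
  then have "(\<lambda>n. real (Suc n) * \<gamma> ^ Suc n) sums (\<gamma> / (1 - \<gamma>)^2)"
    by (simp add: algebra_simps)
  then show ?thesis using sums_Suc_iff[of "\<lambda>t. real t * \<gamma> ^ t"] by simp
qed

lemma per_m:
  assumes rho: "set_pmf \<rho> \<subseteq> S" and tv: "\<forall>s\<in>S. tv_dist (\<pi> s) (\<pi>' s) \<le> \<alpha>"
    and a0: "0 \<le> \<alpha>" and e0: "0 \<le> \<epsilon>"
    and Ab: "\<forall>s\<in>S. \<forall>a. \<bar>Adv P r \<gamma> \<pi> s a\<bar> \<le> \<epsilon>"
  shows "eta_mdp P r \<rho> \<gamma> \<pi>' = eta_mdp P r \<rho> \<gamma> \<pi>
           + visit_exp P \<pi>' \<rho> \<gamma> (\<lambda>s. measure_pmf.expectation (\<pi>' s) (\<lambda>a. Adv P r \<gamma> \<pi> s a))"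
    and "eta_mdp P r \<rho> \<gamma> \<pi>
           + visit_exp P \<pi> \<rho> \<gamma> (\<lambda>s. measure_pmf.expectation (\<pi>' s) (\<lambda>a. Adv P r \<gamma> \<pi> s a))
           - 4 * \<gamma> * \<epsilon> / (1 - \<gamma>)^2 * \<alpha>^2 \<le> eta_mdp P r \<rho> \<gamma> \<pi>'"
proof -
  define Ab where "Ab s = measure_pmf.expectation (\<pi>' s) (\<lambda>a. Adv P r \<gamma> \<pi> s a)" for s
  have AbS: "\<forall>s\<in>S. \<bar>Ab s\<bar> \<le> 2 * CQ" unfolding Ab_def by (auto intro!: pmf_exp_bdd A_bnd)
  have s1: "(\<lambda>t. \<gamma> ^ t * measure_pmf.expectation (state_dist P \<pi>' \<rho> t) Ab)
      sums (eta_mdp P r \<rho> \<gamma> \<pi>' - eta_mdp P r \<rho> \<gamma> \<pi>)"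
    using adv_sums[OF rho, of \<pi>' \<pi>] eta_V[OF rho, of \<pi>] unfolding Ab_def by simp
  have vx': "visit_exp P \<pi>' \<rho> \<gamma> Ab = eta_mdp P r \<rho> \<gamma> \<pi>' - eta_mdp P r \<rho> \<gamma> \<pi>"
    using visit_exp_eq(1)[OF rho AbS, of \<pi>'] sums_unique[OF s1] by simp
  then show "eta_mdp P r \<rho> \<gamma> \<pi>' = eta_mdp P r \<rho> \<gamma> \<pi>
           + visit_exp P \<pi>' \<rho> \<gamma> (\<lambda>s. measure_pmf.expectation (\<pi>' s) (\<lambda>a. Adv P r \<gamma> \<pi> s a))"
    unfolding Ab_def by simp
  have s2: "(\<lambda>t. \<gamma> ^ t * measure_pmf.expectation (state_dist P \<pi> \<rho> t) Ab) sums visit_exp P \<pi> \<rho> \<gamma> Ab"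
    using visit_exp_eq[OF rho AbS, of \<pi>] by (simp add: summable_sums)
  have AbT: "\<forall>s\<in>S. \<bar>Ab s\<bar> \<le> 2 * \<epsilon> * \<alpha>"
  proof
    fix s assume s: "s \<in> S"
    have hb: "\<forall>a. \<bar>Adv P r \<gamma> \<pi> s a\<bar> \<le> \<epsilon>" using Ab s by blast
    have "\<bar>Ab s\<bar> = \<bar>measure_pmf.expectation (\<pi> s) (\<lambda>a. Adv P r \<gamma> \<pi> s a) - Ab s\<bar>"
      using Adv_mean0[OF s, of \<pi>] by simp
    also have "\<dots> \<le> 2 * \<epsilon> * tv_dist (\<pi> s) (\<pi>' s)"
      unfolding Ab_def by (rule pmf_exp_tv[OF hb])
    also have "\<dots> \<le> 2 * \<epsilon> * \<alpha>" using tv s e0 by (intro mult_left_mono) auto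
    finally show "\<bar>Ab s\<bar> \<le> 2 * \<epsilon> * \<alpha>" .
  qed
  have db: "- (4 * \<epsilon> * \<alpha>^2 * (real t * \<gamma> ^ t)) \<le>
      \<gamma> ^ t * measure_pmf.expectation (state_dist P \<pi>' \<rho> t) Ab - \<gamma> ^ t * measure_pmf.expectation (state_dist P \<pi> \<rho> t) Ab"
    for t
  proof -
    have "\<bar>measure_pmf.expectation (state_dist P \<pi>' \<rho> t) Ab - measure_pmf.expectation (state_dist P \<pi> \<rho> t) Ab\<bar>
        \<le> 2 * real t * \<alpha> * (2 * \<epsilon> * \<alpha>)"
      by (rule sd_diff[OF rho tv _ AbT]) (use e0 a0 in simp)
    then have "\<bar>\<gamma> ^ t * (measure_pmf.expectation (state_dist P \<pi>' \<rho> t) Ab - measure_pmf.expectation (state_dist P \<pi> \<rho> t) Ab)\<bar>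
        \<le> \<gamma> ^ t * (2 * real t * \<alpha> * (2 * \<epsilon> * \<alpha>))"
      using gam by (simp add: abs_mult mult_left_mono)
    then show ?thesis by (simp add: algebra_simps power2_eq_square abs_le_iff)
  qed
  have s3: "(\<lambda>t. - (4 * \<epsilon> * \<alpha>^2 * (real t * \<gamma> ^ t))) sums (- (4 * \<epsilon> * \<alpha>^2 * (\<gamma> / (1 - \<gamma>)^2)))"
    by (intro sums_minus sums_mult t_geom_sums)
  have "- (4 * \<epsilon> * \<alpha>^2 * (\<gamma> / (1 - \<gamma>)^2)) \<le>
      (eta_mdp P r \<rho> \<gamma> \<pi>' - eta_mdp P r \<rho> \<gamma> \<pi>) - visit_exp P \<pi> \<rho> \<gamma> Ab"
    by (rule sums_le[OF _ s3 sums_diff[OF s1 s2]]) (use db in blast)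
  then show "eta_mdp P r \<rho> \<gamma> \<pi>
           + visit_exp P \<pi> \<rho> \<gamma> (\<lambda>s. measure_pmf.expectation (\<pi>' s) (\<lambda>a. Adv P r \<gamma> \<pi> s a))
           - 4 * \<gamma> * \<epsilon> / (1 - \<gamma>)^2 * \<alpha>^2 \<le> eta_mdp P r \<rho> \<gamma> \<pi>'"
    unfolding Ab_def by (simp add: algebra_simps)
qed

end


lemma train_integrable:
  assumes "prob_space pM" "Mt \<in> sets pM"
    and "f \<in> borel_measurable pM" "\<forall>m\<in>space pM. \<bar>f m\<bar> \<le> C"
  shows "integrable (p_train pM Mt) (f :: _ \<Rightarrow> real)"
proof -
  interpret prob_space pM by fact
  have gm: "(\<lambda>m. indicator Mt m / measure pM Mt :: real) \<in> borel_measurable pM"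
    using assms(2) by measurable
  have "integrable pM (\<lambda>m. (indicator Mt m / measure pM Mt) *\<^sub>R f m)"
  proof (rule integrable_const_bound[where B="C / measure pM Mt"])
    show "AE x in pM. norm ((indicator Mt x / measure pM Mt) *\<^sub>R f x) \<le> C / measure pM Mt"
    proof (rule AE_I2)
      fix x assume x: "x \<in> space pM"
      have "norm ((indicator Mt x / measure pM Mt) *\<^sub>R f x) = indicator Mt x / measure pM Mt * \<bar>f x\<bar>"
        by (simp add: abs_mult)
      also have "\<dots> \<le> 1 / measure pM Mt * C"
        using assms(4) x by (intro mult_mono) (auto simp: indicator_def divide_right_mono)
      finally show "norm ((indicator Mt x / measure pM Mt) *\<^sub>R f x) \<le> C / measure pM Mt" by simp
    qed
    show "(\<lambda>x. (indicator Mt x / measure pM Mt) *\<^sub>R f x) \<in> borel_measurable pM"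
      using gm assms(3) by measurable
  qed
  then show ?thesis unfolding p_train_def
    using integrable_density[OF assms(3) gm] by simp
qed

theorem lemma1:
  fixes pM :: "'m measure" and Mtrain :: "'m set"
    and P :: "'m \<Rightarrow> 's \<Rightarrow> 'a \<Rightarrow> 's pmf" and r :: "'m \<Rightarrow> 's \<Rightarrow> 'a \<Rightarrow> real"
    and rho0 :: "'m \<Rightarrow> 's pmf" and \<gamma> :: real and \<phi> :: "'m \<Rightarrow> 'u \<Rightarrow> 's"
    and pol pol' :: "'s \<Rightarrow> 'a pmf" and B :: real
  assumes "prob_space pM"
    and "Mtrain \<in> sets pM" and "Mtrain \<subseteq> space pM" and "measure pM Mtrain > 0"
    and "0 < \<gamma>" and "\<gamma> < 1"
    and "\<forall>m\<in>space pM. set_pmf (rho0 m) \<subseteq> range (\<phi> m)"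
    and "\<forall>m\<in>space pM. \<forall>s\<in>range (\<phi> m). \<forall>a. set_pmf (P m s a) \<subseteq> range (\<phi> m)"
    and "\<forall>m\<in>space pM. \<forall>s\<in>range (\<phi> m). \<forall>a. \<bar>r m s a\<bar> \<le> B"
    and "(\<lambda>m. eta_mdp (P m) (r m) (rho0 m) \<gamma> pol) \<in> borel_measurable pM"
    and "(\<lambda>m. eta_mdp (P m) (r m) (rho0 m) \<gamma> pol') \<in> borel_measurable pM"
    and "(\<lambda>m. visit_exp (P m) pol' (rho0 m) \<gamma>
            (\<lambda>s. measure_pmf.expectation (pol' s) (\<lambda>a. Adv (P m) (r m) \<gamma> pol s a))) \<in> borel_measurable pM"
    and "(\<lambda>m. visit_exp (P m) pol (rho0 m) \<gamma>
            (\<lambda>s. measure_pmf.expectation (pol' s) (\<lambda>a. Adv (P m) (r m) \<gamma> pol s a))) \<in> borel_measurable pM"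
    and "(\<lambda>m. SUP u. (tv_dist (pol (\<phi> m u)) (pol' (\<phi> m u)))\<^sup>2) \<in> borel_measurable pM"
  shows "eta pM Mtrain P r rho0 \<gamma> pol' =
           eta pM Mtrain P r rho0 \<gamma> pol + adv_term pM Mtrain P r rho0 \<gamma> pol pol' pol'
         \<and> eta pM Mtrain P r rho0 \<gamma> pol' \<ge>
           (L_surr pM Mtrain P r rho0 \<gamma> pol pol'
           - 4 * \<gamma> * A_max pM P r \<gamma> \<phi> pol / (1 - \<gamma>)\<^sup>2
             * E_train pM Mtrain (\<lambda>m. SUP u. (tv_dist (pol (\<phi> m u)) (pol' (\<phi> m u)))\<^sup>2))"
proof -
  note a = assms
  interpret pM: prob_space pM by fact
  define B' where "B' = max B 0"
  define CQ where "CQ = B' / (1 - \<gamma>)"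
  have mdpm: "mdp (P m) (r m) \<gamma> (range (\<phi> m)) B'" if "m \<in> space pM" for m
  proof (unfold_locales)
    show "0 < \<gamma>" "\<gamma> < 1" using a(5,6) by auto
    show "0 \<le> B'" unfolding B'_def by simp
    fix s a assume "s \<in> range (\<phi> m)"
    then show "set_pmf (P m s a) \<subseteq> range (\<phi> m)" "\<bar>r m s a\<bar> \<le> B'"
      using a(8,9) that unfolding B'_def by (blast, auto simp: le_max_iff_disj)
  qed
  have CQ_eq: "mdp.CQ \<gamma> B' = CQ" if "m \<in> space pM" for m
    unfolding CQ_def using mdp.CQ_def[OF mdpm[OF that]] .
  have CQ0: "0 \<le> CQ" unfolding CQ_def B'_def using a(6) by simp
  define \<epsilon> where "\<epsilon> = A_max pM P r \<gamma> \<phi> pol"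
  define AS where "AS = {\<bar>Adv (P m) (r m) \<gamma> pol s a\<bar> | m s a. m \<in> space pM \<and> s \<in> range (\<phi> m)}"
  have ASb: "bdd_above AS"
  proof (rule bdd_aboveI[where M="2 * CQ"])
    fix x assume "x \<in> AS"
    then obtain m s a where "x = \<bar>Adv (P m) (r m) \<gamma> pol s a\<bar>" "m \<in> space pM" "s \<in> range (\<phi> m)"
      unfolding AS_def by blast
    then show "x \<le> 2 * CQ" using mdp.A_bnd[OF mdpm] CQ_eq by metis
  qed
  have epsb: "\<bar>Adv (P m) (r m) \<gamma> pol s a\<bar> \<le> \<epsilon>" if "m \<in> space pM" "s \<in> range (\<phi> m)" for m s a
    unfolding \<epsilon>_def A_max_def AS_def[symmetric]
    by (rule cSup_upper[OF _ ASb]) (use that in \<open>auto simp: AS_def\<close>)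
  obtain m0 where m0: "m0 \<in> space pM" using pM.not_empty by blast
  have e0: "0 \<le> \<epsilon>" using epsb[OF m0, of "\<phi> m0 undefined" undefined] by simp
  define tv where "tv = (\<lambda>m u. tv_dist (pol (\<phi> m u)) (pol' (\<phi> m u)))"
  define \<beta> where "\<beta> = (\<lambda>m. (SUP u. (tv m u)\<^sup>2))"
  have tvb: "0 \<le> tv m u" "tv m u \<le> 1" for m u unfolding tv_def by (auto intro: tv_nonneg tv_le1)
  have bddtv: "bdd_above (range (\<lambda>u. (tv m u)\<^sup>2))" for m
    by (rule bdd_aboveI[where M=1]) (use tvb in \<open>auto simp: power_le_one\<close>)
  have tv_le_beta: "(tv m u)\<^sup>2 \<le> \<beta> m" for m u
    unfolding \<beta>_def by (rule cSUP_upper[OF _ bddtv]) auto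
  have beta0: "0 \<le> \<beta> m" for m using tv_le_beta[of m undefined] by (meson order_trans zero_le_power2)
  have beta1: "\<beta> m \<le> 1" for m
    unfolding \<beta>_def by (rule cSUP_least) (use tvb in \<open>auto simp: power_le_one\<close>)
  have tv_alpha: "\<forall>s\<in>range (\<phi> m). tv_dist (pol s) (pol' s) \<le> sqrt (\<beta> m)" for m
  proof
    fix s assume "s \<in> range (\<phi> m)"
    then obtain u where s: "s = \<phi> m u" by blast
    have "tv m u = sqrt ((tv m u)\<^sup>2)" using tvb by simp
    also have "\<dots> \<le> sqrt (\<beta> m)" by (rule real_sqrt_le_mono[OF tv_le_beta])
    finally show "tv_dist (pol s) (pol' s) \<le> sqrt (\<beta> m)" unfolding s tv_def .
  qed
  define et where "et = (\<lambda>m. eta_mdp (P m) (r m) (rho0 m) \<gamma> pol)"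
  define et' where "et' = (\<lambda>m. eta_mdp (P m) (r m) (rho0 m) \<gamma> pol')"
  define vx' where "vx' = (\<lambda>m. visit_exp (P m) pol' (rho0 m) \<gamma>
            (\<lambda>s. measure_pmf.expectation (pol' s) (\<lambda>a. Adv (P m) (r m) \<gamma> pol s a)))"
  define vx where "vx = (\<lambda>m. visit_exp (P m) pol (rho0 m) \<gamma>
            (\<lambda>s. measure_pmf.expectation (pol' s) (\<lambda>a. Adv (P m) (r m) \<gamma> pol s a)))"
  define K where "K = 4 * \<gamma> * \<epsilon> / (1 - \<gamma>)\<^sup>2"
  have pm1: "et' m = et m + vx' m" if m: "m \<in> space pM" for m
    unfolding et_def et'_def vx'_def
    by (rule mdp.per_m(1)[OF mdpm[OF m] _ tv_alpha _ e0])
       (use a(7) m epsb beta0 in auto)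
  have pm2: "et m + vx m - K * \<beta> m \<le> et' m" if m: "m \<in> space pM" for m
  proof -
    have "et m + vx m - K * (sqrt (\<beta> m))\<^sup>2 \<le> et' m"
      unfolding et_def et'_def vx_def K_def
      by (rule mdp.per_m(2)[OF mdpm[OF m] _ tv_alpha _ e0]) (use a(7) m epsb beta0 in auto)
    then show ?thesis using beta0[of m] by simp
  qed
  have etb: "\<bar>eta_mdp (P m) (r m) (rho0 m) \<gamma> \<sigma>\<bar> \<le> CQ" if m: "m \<in> space pM" for m \<sigma>
  proof -
    interpret M: mdp "P m" "r m" \<gamma> "range (\<phi> m)" B' by (rule mdpm[OF m])
    have rho: "set_pmf (rho0 m) \<subseteq> range (\<phi> m)" using a(7) m by auto
    show ?thesis unfolding M.eta_V[OF rho] CQ_eq[OF m, symmetric]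
      by (intro pmf_exp_bdd) (use rho M.V_bnd in blast)
  qed
  have vxb: "\<bar>vx m\<bar> \<le> 2 * CQ / (1 - \<gamma>)" if m: "m \<in> space pM" for m
  proof -
    interpret M: mdp "P m" "r m" \<gamma> "range (\<phi> m)" B' by (rule mdpm[OF m])
    have Abb: "\<forall>s\<in>range (\<phi> m). \<bar>measure_pmf.expectation (pol' s) (\<lambda>a. Adv (P m) (r m) \<gamma> pol s a)\<bar> \<le> 2 * CQ"
      using M.A_bnd CQ_eq[OF m] by (auto intro!: pmf_exp_bdd)
    have rho: "set_pmf (rho0 m) \<subseteq> range (\<phi> m)" using a(7) m by auto
    show ?thesis unfolding vx_def M.visit_exp_eq(1)[OF rho Abb]
    proof (rule geo_bound(2))
      fix k
      have "\<bar>measure_pmf.expectation (state_dist (P m) pol (rho0 m) k)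
          (\<lambda>s. measure_pmf.expectation (pol' s) (\<lambda>a. Adv (P m) (r m) \<gamma> pol s a))\<bar> \<le> 2 * CQ"
        by (rule pmf_exp_bdd) (use M.sd_support[OF rho] Abb in blast)
      then show "\<bar>\<gamma> ^ k * measure_pmf.expectation (state_dist (P m) pol (rho0 m) k)
          (\<lambda>s. measure_pmf.expectation (pol' s) (\<lambda>a. Adv (P m) (r m) \<gamma> pol s a))\<bar> \<le> 2 * CQ * \<gamma> ^ k"
        using a(5) by (intro gpow_le) auto
    qed (use a(5,6) in auto)
  qed
  have int_et: "integrable (p_train pM Mtrain) et"
    by (rule train_integrable[OF a(1,2), where C=CQ]) (use a(10) etb in \<open>auto simp: et_def\<close>)
  have int_et': "integrable (p_train pM Mtrain) et'"
    by (rule train_integrable[OF a(1,2), where C=CQ]) (use a(11) etb in \<open>auto simp: et'_def\<close>)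
  have int_vx': "integrable (p_train pM Mtrain) vx'"
  proof (rule train_integrable[OF a(1,2), where C="2 * CQ"])
    show "vx' \<in> borel_measurable pM" using a(12) unfolding vx'_def .
    show "\<forall>m\<in>space pM. \<bar>vx' m\<bar> \<le> 2 * CQ"
    proof
      fix m assume m: "m \<in> space pM"
      have "vx' m = et' m - et m" using pm1[OF m] by simp
      then show "\<bar>vx' m\<bar> \<le> 2 * CQ" using etb[OF m, of pol] etb[OF m, of pol']
        unfolding et_def et'_def by simp
    qed
  qed
  have int_vx: "integrable (p_train pM Mtrain) vx"
    by (rule train_integrable[OF a(1,2), where C="2 * CQ / (1 - \<gamma>)"]) (use a(13) vxb in \<open>auto simp: vx_def\<close>)
  have int_b: "integrable (p_train pM Mtrain) \<beta>"
    by (rule train_integrable[OF a(1,2), where C=1]) (use a(14) beta0 beta1 in \<open>auto simp: \<beta>_def tv_def\<close>)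
  have sp: "space (p_train pM Mtrain) = space pM" by (simp add: p_train_def)
  have eq1: "E_train pM Mtrain et' = E_train pM Mtrain et + E_train pM Mtrain vx'"
  proof -
    have "E_train pM Mtrain et' = E_train pM Mtrain (\<lambda>m. et m + vx' m)"
      unfolding E_train_def by (rule Bochner_Integration.integral_cong) (auto simp: sp pm1)
    then show ?thesis unfolding E_train_def using int_et int_vx' by simp
  qed
  have ineq: "E_train pM Mtrain et + E_train pM Mtrain vx - K * E_train pM Mtrain \<beta> \<le> E_train pM Mtrain et'"
  proof -
    have "E_train pM Mtrain et + E_train pM Mtrain vx - K * E_train pM Mtrain \<beta>
        = E_train pM Mtrain (\<lambda>m. et m + vx m - K * \<beta> m)"
      unfolding E_train_def using int_et int_vx int_b by simp
    also have "\<dots> \<le> E_train pM Mtrain et'"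
      unfolding E_train_def
      by (rule integral_mono) (use int_et int_vx int_b int_et' pm2 sp in auto)
    finally show ?thesis .
  qed
  show ?thesis
    using eq1 ineq
    unfolding eta_def adv_term_def L_surr_def et_def et'_def vx_def vx'_def K_def \<epsilon>_def \<beta>_def tv_def
    by simp
qed

end
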